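(* Let $\ell_n>0$, $\sigma_{n,0}>0$, $\sigma_{n,1}\ge0$, $\sigma_{n,-1}\ge0$, $\kappa_n\in\mathbb R$ for $n\in\mathbb N$, and assume $$\liminf_{n\to\infty}\sigma_{n,0}>0,\qquad \limsup_{n\to\infty}\sigma_{n,1}\sqrt{\ell_{n+1}/\ell_n}<\infty,\qquad \limsup_{n\to\infty}\sigma_{n,-1}\sqrt{\ell_{n-1}/\ell_n}<\infty,\qquad \limsup_{n\to\infty}\frac{|\kappa_n|}{\sqrt{\ell_n}}<\infty .$$ If a real sequence $(x_n)_{n\in\mathbb N}$ (with some $x_0\in\mathbb R$) satisfies $$\ell_n = x_n\big(\sigma_{n,1}x_{n+1}+\sigma_{n,0}x_n+\sigma_{n,-1}x_{n-1}\big)+\kappa_n x_n,\qquad n\in\mathbb N,$$ then $$\liminf_{n\to\infty}\frac{x_n}{\sqrt{\ell_n}}>-\infty\iff\limsup_{n\to\infty}\frac{x_n}{\sqrt{\ell_n}}<\infty .$$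
   Context: $\mathbb N=\{1,2,3,\dots\}$. The sequence $(x_n)$ need not be positive. *)

theory Defs
  imports "HOL-Analysis.Analysis"
begin

end

theory Submission
  imports Defs
begin

lemma ls_bound:
  fixes f :: "nat \<Rightarrow> real"
  assumes "limsup (\<lambda>n. ereal (f n)) < \<infinity>"
  shows "\<exists>A N. \<forall>n\<ge>N. f n \<le> A"
proof -
  have "limsup (\<lambda>n. ereal (f n)) \<noteq> \<infinity>" using assms by simp
  then obtain k :: nat where "limsup (\<lambda>n. ereal (f n)) < ereal (real k)"
    unfolding less_PInf_Ex_of_nat by blast
  then have "eventually (\<lambda>n. ereal (f n) < ereal (real k)) sequentially"
    by (rule Limsup_lessD)
  then obtain N where "\<forall>n\<ge>N. f n < real k" by (auto simp: eventually_sequentially)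
  then have "\<forall>n\<ge>N. f n \<le> real k" by (simp add: less_imp_le)
  then show ?thesis by blast
qed

lemma li_bound:
  fixes f :: "nat \<Rightarrow> real"
  assumes "liminf (\<lambda>n. ereal (f n)) > z"
  shows "\<exists>c N. z < ereal c \<and> (\<forall>n\<ge>N. c \<le> f n)"
proof -
  obtain c where c: "z < ereal c" "ereal c < liminf (\<lambda>n. ereal (f n))"
    using ereal_dense2[OF assms] by blast
  then have "eventually (\<lambda>n. ereal (f n) > ereal c) sequentially"
    by (intro less_LiminfD)
  then obtain N where "\<forall>n\<ge>N. c < f n" by (auto simp: eventually_sequentially)
  then have "\<forall>n\<ge>N. c \<le> f n" by (simp add: less_imp_le)
  then show ?thesis using c by blast
qed

lemma core:
  fixes c a b k A B K M y p q :: real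
  assumes "c > 0" "c \<le> s" "a \<ge> 0" "a \<le> A" "b \<ge> 0" "b \<le> B" "\<bar>k\<bar> \<le> K"
    "p \<ge> -M" "q \<ge> -M" "M \<ge> 0" "1 = s*y^2 + y*(a*p+b*q+k)"
  shows "y \<le> max 1 ((1+K+(A+B)*M)/c)"
proof (cases "y \<le> 1")
  case True then show ?thesis by simp
next
  case False
  have "a*p \<ge> a*(-M)" using assms by (intro mult_left_mono) auto
  moreover have "a*(-M) \<ge> -(A*M)" using assms by (simp add: mult_right_mono)
  moreover have "b*q \<ge> b*(-M)" using assms by (intro mult_left_mono) auto
  moreover have "b*(-M) \<ge> -(B*M)" using assms by (simp add: mult_right_mono)
  moreover have "k \<ge> -K" using assms by linarith
  ultimately have s: "a*p+b*q+k \<ge> -((A+B)*M+K)" by (simp add: algebra_simps)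
  have "y*(a*p+b*q+k) \<ge> y*(-((A+B)*M+K))" using s False by (intro mult_left_mono) auto
  then have "s*y^2 \<le> 1 + y*((A+B)*M+K)" using assms(11) by (simp add: algebra_simps)
  moreover have "c*y^2 \<le> s*y^2" using assms(2) by (intro mult_right_mono) auto
  ultimately have "c*y^2 \<le> 1 + y*((A+B)*M+K)" by linarith
  also have "\<dots> \<le> y*(1+(A+B)*M+K)" using False by (simp add: algebra_simps)
  finally have h0: "c*y^2 \<le> y*(1+(A+B)*M+K)" .
  have "y*(c*y) = c*y^2" by (simp add: power2_eq_square)
  then have h: "y*(c*y) \<le> y*(1+(A+B)*M+K)" using h0 by linarith
  have "c*y \<le> 1+(A+B)*M+K" using mult_left_le_imp_le[OF h] False by linarith
  then have "y \<le> (1+K+(A+B)*M)/c" using assms(1) by (simp add: pos_le_divide_eq mult.commute add_ac)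
  then show ?thesis by simp
qed

theorem theorem6p1:
  fixes l s0 s1 sm1 \<kappa> x :: "nat \<Rightarrow> real"
  assumes l_pos: "\<And>n. n \<ge> 1 \<Longrightarrow> l n > 0"
    and s0_pos: "\<And>n. n \<ge> 1 \<Longrightarrow> s0 n > 0"
    and s1_nonneg: "\<And>n. n \<ge> 1 \<Longrightarrow> s1 n \<ge> 0"
    and sm1_nonneg: "\<And>n. n \<ge> 1 \<Longrightarrow> sm1 n \<ge> 0"
    and h0: "liminf (\<lambda>n. ereal (s0 n)) > 0"
    and h1: "limsup (\<lambda>n. ereal (s1 n * sqrt (l (n + 1) / l n))) < \<infinity>"
    and hm1: "limsup (\<lambda>n. ereal (sm1 n * sqrt (l (n - 1) / l n))) < \<infinity>"
    and hk: "limsup (\<lambda>n. ereal (\<bar>\<kappa> n\<bar> / sqrt (l n))) < \<infinity>"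
    and rec: "\<And>n. n \<ge> 1 \<Longrightarrow>
       l n = x n * (s1 n * x (n + 1) + s0 n * x n + sm1 n * x (n - 1)) + \<kappa> n * x n"
  shows "liminf (\<lambda>n. ereal (x n / sqrt (l n))) > -\<infinity> \<longleftrightarrow>
         limsup (\<lambda>n. ereal (x n / sqrt (l n))) < \<infinity>"
proof -
  define y where "y n = x n / sqrt (l n)" for n
  define a where "a n = s1 n * sqrt (l (n + 1) / l n)" for n
  define b where "b n = sm1 n * sqrt (l (n - 1) / l n)" for n
  define k where "k n = \<kappa> n / sqrt (l n)" for n
  have key: "1 = s0 n * (y n)^2 + y n * (a n * y (n+1) + b n * y (n-1) + k n)" if n: "n \<ge> 2" for n
  proof -
    define u where "u = sqrt (l n)"
    define v where "v = sqrt (l (n+1))"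
    define w where "w = sqrt (l (n-1))"
    have u: "u > 0" "l n = u^2" using l_pos[of n] n unfolding u_def by auto
    have v: "v > 0" using l_pos[of "n+1"] n unfolding v_def by auto
    have w: "w > 0" using l_pos[of "n-1"] n unfolding w_def by auto
    have xs: "x n = y n * u" "x (n+1) = y (n+1) * v" "x (n-1) = y (n-1) * w"
      using u v w unfolding y_def u_def v_def w_def by auto
    have ab: "a n = s1 n * v / u" "b n = sm1 n * w / u" "k n = \<kappa> n / u"
      unfolding a_def b_def k_def u_def v_def w_def by (auto simp: real_sqrt_divide)
    have "u^2 = y n * u * (s1 n * (y (n+1) * v) + s0 n * (y n * u) + sm1 n * (y (n-1) * w)) + \<kappa> n * (y n * u)"
      using rec[of n] n xs u by simp
    then have e: "u*u = u * (\<kappa> n * y n + u * (s0 n * (y n * y n)) + v * (s1 n * (y n * y (n+1))) + w * (sm1 n * (y n * y (n-1))))"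
      by (simp add: algebra_simps power2_eq_square)
    then have e2: "u = \<kappa> n * y n + u * (s0 n * (y n * y n)) + v * (s1 n * (y n * y (n+1))) + w * (sm1 n * (y n * y (n-1)))"
      using u(1) by simp
    show ?thesis unfolding ab using u e2
      by (simp add: field_simps power2_eq_square)
  qed
  obtain A N1 where A: "\<forall>n\<ge>N1. a n \<le> A" using ls_bound[OF h1] unfolding a_def by blast
  obtain B N2 where B: "\<forall>n\<ge>N2. b n \<le> B" using ls_bound[OF hm1] unfolding b_def by blast
  obtain K N3 where K: "\<forall>n\<ge>N3. \<bar>\<kappa> n\<bar> / sqrt (l n) \<le> K" using ls_bound[OF hk] by blast
  obtain c N4 where c: "0 < ereal c" "\<forall>n\<ge>N4. c \<le> s0 n" using li_bound[OF h0] by blast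
  define N where "N = N1 + N2 + N3 + N4 + 2"
  have gen: "\<exists>U P. \<forall>n\<ge>P. y' n \<le> U"
    if yk: "\<And>n. n \<ge> 2 \<Longrightarrow> 1 = s0 n * (y' n)^2 + y' n * (a n * y' (n+1) + b n * y' (n-1) + k' n)"
    and kk: "\<And>n. \<bar>k' n\<bar> = \<bar>k n\<bar>"
    and lo: "\<forall>n\<ge>N0. M0 \<le> y' n" for y' k' N0 M0
  proof -
    define M where "M = max 0 (-M0)"
    define P where "P = N + N0 + 1"
    have "y' n \<le> max 1 ((1+K+(A+B)*M)/c)" if n: "n \<ge> P" for n
    proof (rule core[where p="y' (n+1)" and q="y' (n-1)" and a="a n" and b="b n" and k="k' n"
          and s="s0 n"])
      show "0 < c" using c by simp
      show "c \<le> s0 n" using c n unfolding P_def N_def by simp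
      show "0 \<le> a n" unfolding a_def using s1_nonneg[of n] l_pos[of n] l_pos[of "n+1"] n unfolding P_def N_def
        by (intro mult_nonneg_nonneg) (auto intro!: divide_nonneg_pos less_imp_le)
      show "0 \<le> b n" unfolding b_def using sm1_nonneg[of n] l_pos[of n] l_pos[of "n-1"] n unfolding P_def N_def
        by (intro mult_nonneg_nonneg) (auto intro!: divide_nonneg_pos less_imp_le)
      show "a n \<le> A" using A n unfolding P_def N_def by simp
      show "b n \<le> B" using B n unfolding P_def N_def by simp
      show "\<bar>k' n\<bar> \<le> K" using K n kk[of n] unfolding P_def N_def k_def
        using l_pos[of n] by (simp add: abs_div)
      show "- M \<le> y' (n + 1)"
      proof -
        have "M0 \<le> y' (n + 1)" using lo n unfolding P_def N_def by auto
        then show ?thesis unfolding M_def by (auto simp: max_def)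
      qed
      show "- M \<le> y' (n - 1)"
      proof -
        have "M0 \<le> y' (n - 1)" using lo n unfolding P_def N_def by auto
        then show ?thesis unfolding M_def by (auto simp: max_def)
      qed
      show "0 \<le> M" unfolding M_def by simp
      show "1 = s0 n * (y' n)\<^sup>2 + y' n * (a n * y' (n + 1) + b n * y' (n - 1) + k' n)"
        using yk[of n] n unfolding P_def N_def by simp
    qed
    then show ?thesis by blast
  qed
  have ev_lo: "liminf (\<lambda>n. ereal (f n)) > -\<infinity> \<longleftrightarrow> (\<exists>M0 N0. \<forall>n\<ge>N0. M0 \<le> f n)" for f :: "nat \<Rightarrow> real"
  proof
    assume "liminf (\<lambda>n. ereal (f n)) > -\<infinity>"
    from li_bound[OF this] show "\<exists>M0 N0. \<forall>n\<ge>N0. M0 \<le> f n" by blast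
  next
    assume "\<exists>M0 N0. \<forall>n\<ge>N0. M0 \<le> f n"
    then obtain M0 N0 where "\<forall>n\<ge>N0. M0 \<le> f n" by blast
    then have "ereal M0 \<le> liminf (\<lambda>n. ereal (f n))"
      by (intro Liminf_bounded) (auto simp: eventually_sequentially)
    then show "liminf (\<lambda>n. ereal (f n)) > -\<infinity>" by auto
  qed
  have ev_up: "limsup (\<lambda>n. ereal (f n)) < \<infinity> \<longleftrightarrow> (\<exists>M0 N0. \<forall>n\<ge>N0. f n \<le> M0)" for f :: "nat \<Rightarrow> real"
  proof
    assume "limsup (\<lambda>n. ereal (f n)) < \<infinity>"
    from ls_bound[OF this] show "\<exists>M0 N0. \<forall>n\<ge>N0. f n \<le> M0" by blast
  next
    assume "\<exists>M0 N0. \<forall>n\<ge>N0. f n \<le> M0"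
    then obtain M0 N0 where "\<forall>n\<ge>N0. f n \<le> M0" by blast
    then have "limsup (\<lambda>n. ereal (f n)) \<le> ereal M0"
      by (intro Limsup_bounded) (auto simp: eventually_sequentially)
    then show "limsup (\<lambda>n. ereal (f n)) < \<infinity>" by auto
  qed
  have "(\<exists>M0 N0. \<forall>n\<ge>N0. M0 \<le> y n) \<longleftrightarrow> (\<exists>M0 N0. \<forall>n\<ge>N0. y n \<le> M0)"
  proof
    assume "\<exists>M0 N0. \<forall>n\<ge>N0. M0 \<le> y n"
    then obtain M0 N0 where "\<forall>n\<ge>N0. M0 \<le> y n" by blast
    from gen[of y k, OF key _ this] show "\<exists>M0 N0. \<forall>n\<ge>N0. y n \<le> M0" by blast
  next
    assume "\<exists>M0 N0. \<forall>n\<ge>N0. y n \<le> M0"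
    then obtain M0 N0 where "\<forall>n\<ge>N0. y n \<le> M0" by blast
    then have lo: "\<forall>n\<ge>N0. -M0 \<le> - y n" by auto
    have yk: "1 = s0 n * (- y n)^2 + (- y n) * (a n * (- y (n+1)) + b n * (- y (n-1)) + (- k n))"
      if "n \<ge> 2" for n using key[OF that] by (simp add: algebra_simps)
    from gen[of "\<lambda>n. - y n" "\<lambda>n. - k n", OF yk _ lo] obtain U P where "\<forall>n\<ge>P. - y n \<le> U" by auto
    then have "\<forall>n\<ge>P. -U \<le> y n" by auto
    then show "\<exists>M0 N0. \<forall>n\<ge>N0. M0 \<le> y n" by blast
  qed
  then show ?thesis unfolding ev_lo ev_up y_def .
qed

end
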